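(* For a natural number $j$ and real $X\ge1$, let $N_j^*(X)$ be the number of tuples $(d_1,\dots,d_j)$ of natural numbers $d_k\ge1$ with $\prod_{k=1}^j(3d_k)\le X$. Let $j\ge2$. Then $N_j^*(X)=0$ for $X<3^j$, and for $X\ge 3^j$, $$N_j^*(X)\le \frac{1}{(j-1)!}\,\frac13\Big(\frac23\Big)^{j-1}X\,\Big(\log\Big(\frac13\Big(\frac23\Big)^{j-1}X\Big)\Big)^{j-1}.$$ *)

theory Defs
  imports Complex_Main
begin

definition Nstar :: "nat \<Rightarrow> real \<Rightarrow> nat" where
  "Nstar j X = card {ds :: nat list. length ds = j \<and> (\<forall>d\<in>set ds. d \<ge> 1)
                       \<and> real (\<Prod>d\<leftarrow>ds. 3 * d) \<le> X}"

end

theory Submission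
  imports Defs
begin

definition S :: "nat \<Rightarrow> real \<Rightarrow> nat list set" where
  "S k Y = {ds. length ds = k \<and> (\<forall>d\<in>set ds. d \<ge> 1) \<and> real (prod_list ds) \<le> Y}"

lemma prod_list_ge1: "\<forall>d\<in>set ds. (d::nat) \<ge> 1 \<Longrightarrow> prod_list ds \<ge> 1"
  by (induction ds) auto

lemma prod_list_3: "(\<Prod>d\<leftarrow>ds. 3 * (d::nat)) = 3 ^ length ds * prod_list ds"
  by (induction ds) auto

lemma S_Suc_sub: "S (Suc k) Y \<subseteq> (\<lambda>p. fst p # snd p) ` (SIGMA d:{1..nat \<lfloor>Y\<rfloor>}. S k (Y / real d))"
proof
  fix ds assume "ds \<in> S (Suc k) Y"
  then obtain d ds' where ds: "ds = d # ds'" and l: "length ds' = k" and d1: "d \<ge> 1"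
    and a: "\<forall>x\<in>set ds'. x \<ge> 1" and p: "real d * real (prod_list ds') \<le> Y"
    unfolding S_def by (cases ds) auto
  have p1: "real (prod_list ds') \<ge> 1" using prod_list_ge1[OF a] by simp
  have "real d \<le> Y" using p p1 d1
    by (smt (verit, ccfv_SIG) mult_le_cancel_left1 of_nat_0_le_iff)
  hence "d \<le> nat \<lfloor>Y\<rfloor>" by (simp add: le_nat_floor)
  moreover have "real (prod_list ds') \<le> Y / real d" using p d1
    by (simp add: field_simps)
  ultimately have "(d, ds') \<in> (SIGMA d:{1..nat \<lfloor>Y\<rfloor>}. S k (Y / real d))"
    using d1 l a unfolding S_def by auto
  thus "ds \<in> (\<lambda>p. fst p # snd p) ` (SIGMA d:{1..nat \<lfloor>Y\<rfloor>}. S k (Y / real d))"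
    using ds by force
qed

lemma S_finite: "finite (S k Y)"
proof (induction k arbitrary: Y)
  case 0
  have "S 0 Y \<subseteq> {[]}" unfolding S_def by auto
  thus ?case using finite_subset by blast
next
  case (Suc k)
  show ?case using S_Suc_sub[of k Y] Suc
    by (meson finite_SigmaI finite_atLeastAtMost finite_imageI finite_subset)
qed

lemma S_card_Suc: "card (S (Suc k) Y) \<le> (\<Sum>d\<in>{1..nat \<lfloor>Y\<rfloor>}. card (S k (Y / real d)))"
proof -
  have fin: "finite (SIGMA d:{1..nat \<lfloor>Y\<rfloor>}. S k (Y / real d))"
    using S_finite by blast
  have "card (S (Suc k) Y) \<le> card ((\<lambda>p. fst p # snd p) ` (SIGMA d:{1..nat \<lfloor>Y\<rfloor>}. S k (Y / real d)))"
    using S_Suc_sub fin by (intro card_mono) auto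
  also have "\<dots> \<le> card (SIGMA d:{1..nat \<lfloor>Y\<rfloor>}. S k (Y / real d))"
    using card_image_le fin by blast
  also have "\<dots> = (\<Sum>d\<in>{1..nat \<lfloor>Y\<rfloor>}. card (S k (Y / real d)))"
    using S_finite by simp
  finally show ?thesis .
qed

lemma S0_card: "card (S 0 Y) \<le> 1"
proof -
  have "S 0 Y \<subseteq> {[]}" unfolding S_def by auto
  hence "card (S 0 Y) \<le> card {[] :: nat list}" by (intro card_mono) auto
  thus ?thesis by simp
qed

lemma pow_diff_ge:
  fixes A B :: real
  assumes "B \<ge> 0" "A \<ge> B"
  shows "A ^ Suc m - B ^ Suc m \<ge> real (Suc m) * B ^ m * (A - B)"
proof (induction m)
  case 0 then show ?case by simp
next
  case (Suc m)
  have "A ^ Suc (Suc m) - B ^ Suc (Suc m) = A * (A ^ Suc m - B ^ Suc m) + B ^ Suc m * (A - B)"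
    by (simp add: algebra_simps)
  also have "\<dots> \<ge> A * (real (Suc m) * B ^ m * (A - B)) + B ^ Suc m * (A - B)"
    using Suc assms by (intro add_right_mono mult_left_mono) auto
  moreover have "A * (real (Suc m) * B ^ m * (A - B)) \<ge> B * (real (Suc m) * B ^ m * (A - B))"
    using assms by (intro mult_right_mono) auto
  ultimately show ?case by (simp add: algebra_simps)
qed

lemma pow_binom_ge:
  fixes L :: real
  assumes "L \<ge> 0"
  shows "L ^ Suc m + real (Suc m) * L ^ m \<le> (L + 1) ^ Suc m"
proof (induction m)
  case 0 then show ?case by simp
next
  case (Suc m)
  have "(L + 1) ^ Suc (Suc m) = (L + 1) * (L + 1) ^ Suc m" by simp
  also have "\<dots> \<ge> (L + 1) * (L ^ Suc m + real (Suc m) * L ^ m)"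
    using Suc assms by (intro mult_left_mono) auto
  moreover have "(L + 1) * (L ^ Suc m + real (Suc m) * L ^ m) \<ge> L ^ Suc (Suc m) + real (Suc (Suc m)) * L ^ Suc m"
    using assms by (simp add: algebra_simps)
  ultimately show ?case by linarith
qed

lemma term_bound:
  fixes Y d :: real and k :: nat
  assumes "d \<ge> 2" "d \<le> Y"
  shows "(1 / d) * (ln (Y / d) + k) ^ k \<le>
     (ln (Y / (d - 1)) + k) ^ Suc k / (k + 1) - (ln (Y / d) + k) ^ Suc k / (k + 1)"
proof -
  define A where "A = ln (Y / (d - 1)) + k"
  define B where "B = ln (Y / d) + k"
  have B0: "B \<ge> 0" unfolding B_def using assms by simp
  have "ln (Y / d) \<le> ln (Y / (d - 1))" using assms
    by (simp add: frac_le)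
  have AB: "A - B = ln (d / (d - 1))" unfolding A_def B_def using assms
    by (simp add: ln_div)
  have "ln ((d - 1) / d) \<le> (d - 1) / d - 1" using assms by (intro ln_le_minus_one) auto
  also have "\<dots> = - (1 / d)" using assms by (simp add: field_simps)
  finally have "ln (d / (d - 1)) \<ge> 1 / d" using assms
    by (simp add: ln_div)
  hence AB1: "A - B \<ge> 1 / d" using AB by simp
  hence "A \<ge> B" using assms by (smt (verit) divide_nonneg_nonneg)
  from pow_diff_ge[OF B0 this, of k]
  have "A ^ Suc k - B ^ Suc k \<ge> real (Suc k) * B ^ k * (A - B)" .
  moreover have "real (Suc k) * B ^ k * (A - B) \<ge> real (Suc k) * B ^ k * (1 / d)"
    using AB1 B0 by (intro mult_left_mono) auto
  ultimately have "A ^ Suc k - B ^ Suc k \<ge> real (Suc k) * (B ^ k * (1 / d))" by simp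
  hence "(A ^ Suc k - B ^ Suc k) / (k + 1) \<ge> B ^ k * (1 / d)"
    by (simp add: field_simps)
  thus ?thesis unfolding A_def[symmetric] B_def[symmetric] by (simp add: diff_divide_distrib)
qed

lemma sum_bound_aux:
  fixes Y :: real and k n :: nat
  assumes "real (Suc n) \<le> Y"
  shows "(\<Sum>d\<in>{1..Suc n}. (1 / real d) * (ln (Y / real d) + k) ^ k) \<le>
     (ln Y + k) ^ k + (ln Y + k) ^ Suc k / (k + 1) - (ln (Y / real (Suc n)) + k) ^ Suc k / (k + 1)"
  using assms
proof (induction n)
  case 0 then show ?case by simp
next
  case (Suc n)
  have "(\<Sum>d\<in>{1..Suc (Suc n)}. (1 / real d) * (ln (Y / real d) + k) ^ k) =
    (\<Sum>d\<in>{1..Suc n}. (1 / real d) * (ln (Y / real d) + k) ^ k) +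
     (1 / real (Suc (Suc n))) * (ln (Y / real (Suc (Suc n))) + k) ^ k" by simp
  moreover have "(1 / real (Suc (Suc n))) * (ln (Y / real (Suc (Suc n))) + k) ^ k \<le>
     (ln (Y / (real (Suc (Suc n)) - 1)) + k) ^ Suc k / (k + 1) - (ln (Y / real (Suc (Suc n))) + k) ^ Suc k / (k + 1)"
    using Suc.prems by (intro term_bound) auto
  moreover have "real (Suc (Suc n)) - 1 = real (Suc n)" by simp
  ultimately show ?case using Suc by simp
qed

lemma sum_bound:
  fixes Y :: real and k :: nat
  assumes "Y \<ge> 1"
  shows "(\<Sum>d\<in>{1..nat \<lfloor>Y\<rfloor>}. (1 / real d) * (ln (Y / real d) + k) ^ k) \<le>
     (ln Y + k) ^ k + (ln Y + k) ^ Suc k / (k + 1)"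
proof -
  obtain n where n: "nat \<lfloor>Y\<rfloor> = Suc n" using assms
    by (metis Suc_pred' le_nat_floor nat_less_le not_one_le_zero of_nat_1 zero_less_iff_neq_zero)
  have nY: "real (Suc n) \<le> Y" using of_nat_floor[of Y] n assms by simp
  have "(ln (Y / real (Suc n)) + k) ^ Suc k / (k + 1) \<ge> 0"
    using nY by simp
  thus ?thesis using sum_bound_aux[OF nY, of k] n by simp
qed

lemma main_bound:
  fixes Y :: real
  assumes "Y \<ge> 1"
  shows "real (card (S (Suc k) Y)) \<le> Y * (ln Y + k) ^ k / fact k"
  using assms
proof (induction k arbitrary: Y)
  case 0
  have "card (S 1 Y) \<le> (\<Sum>d\<in>{1..nat \<lfloor>Y\<rfloor>}. card (S 0 (Y / real d)))"
    using S_card_Suc[of 0 Y] by simp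
  also have "\<dots> \<le> (\<Sum>d\<in>{1..nat \<lfloor>Y\<rfloor>}. 1)"
    using S0_card by (intro sum_mono) auto
  also have "\<dots> = nat \<lfloor>Y\<rfloor>" by simp
  finally have "real (card (S 1 Y)) \<le> real (nat \<lfloor>Y\<rfloor>)" by linarith
  also have "\<dots> \<le> Y" using 0 by linarith
  finally show ?case by simp
next
  case (Suc k)
  define L where "L = ln Y + k"
  have L0: "L \<ge> 0" unfolding L_def using Suc.prems by simp
  have "real (card (S (Suc (Suc k)) Y)) \<le> (\<Sum>d\<in>{1..nat \<lfloor>Y\<rfloor>}. real (card (S (Suc k) (Y / real d))))"
    using S_card_Suc[of "Suc k" Y] by (metis of_nat_le_iff of_nat_sum)
  also have "\<dots> \<le> (\<Sum>d\<in>{1..nat \<lfloor>Y\<rfloor>}. (Y / real d) * (ln (Y / real d) + k) ^ k / fact k)"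
  proof (intro sum_mono Suc.IH)
    fix d assume d: "d \<in> {1..nat \<lfloor>Y\<rfloor>}"
    hence "real d \<le> real (nat \<lfloor>Y\<rfloor>)" by simp
    hence "real d \<le> Y" using of_nat_floor[of Y] Suc.prems by linarith
    thus "1 \<le> Y / real d" using d by simp
  qed
  also have "\<dots> = Y / fact k * (\<Sum>d\<in>{1..nat \<lfloor>Y\<rfloor>}. (1 / real d) * (ln (Y / real d) + k) ^ k)"
    by (simp add: sum_distrib_left mult.commute)
  also have "\<dots> \<le> Y / fact k * (L ^ k + L ^ Suc k / (k + 1))"
    unfolding L_def using Suc.prems by (intro mult_left_mono sum_bound) auto
  also have "\<dots> = Y / fact (Suc k) * (L ^ Suc k + real (Suc k) * L ^ k)"
    by (simp add: field_simps)
  also have "\<dots> \<le> Y / fact (Suc k) * (L + 1) ^ Suc k"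
    using pow_binom_ge[OF L0, of k] Suc.prems by (intro mult_left_mono) auto
  also have "\<dots> = Y * (ln Y + real (Suc k)) ^ Suc k / fact (Suc k)"
  proof -
    have h: "L + 1 = ln Y + real (Suc k)" unfolding L_def by simp
    show ?thesis unfolding h by (rule times_divide_eq_left)
  qed
  finally show ?case .
qed

lemma Nstar_S: "Nstar j X = card (S j (X / 3 ^ j))"
proof -
  have seteq: "{ds :: nat list. length ds = j \<and> (\<forall>d\<in>set ds. d \<ge> 1)
                       \<and> real (\<Prod>d\<leftarrow>ds. 3 * d) \<le> X} = S j (X / 3 ^ j)"
    unfolding S_def prod_list_3 by (auto simp: field_simps)
  show ?thesis unfolding Nstar_def seteq ..
qed

lemma S_empty:
  assumes X: "X < 3 ^ j"
  shows "S j (X / 3 ^ j) = {}"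
proof (rule ccontr)
  assume "S j (X / 3 ^ j) \<noteq> {}"
  then obtain ds where "ds \<in> S j (X / 3 ^ j)" by blast
  hence a: "\<forall>d\<in>set ds. d \<ge> 1" and p: "real (prod_list ds) \<le> X / 3 ^ j"
    unfolding S_def by auto
  have "real (prod_list ds) \<ge> 1" using prod_list_ge1[OF a] by simp
  hence "1 \<le> X / 3 ^ j" using p by linarith
  thus False using X by (simp add: field_simps)
qed

lemma ln2_ge: "ln (2::real) \<ge> 1/2"
proof -
  have "ln (1/2::real) \<le> 1/2 - 1" by (intro ln_le_minus_one) auto
  thus ?thesis by (simp add: ln_div)
qed

lemma part2:
  fixes k :: nat and X :: real
  assumes X: "X \<ge> 3 ^ Suc k"
  shows "real (Nstar (Suc k) X) \<le> 1 / fact k * (1/3) * (2/3) ^ k * X *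
              (ln ((1/3) * (2/3) ^ k * X)) ^ k"
proof -
  define Y where "Y = X / 3 ^ Suc k"
  have Y1: "Y \<ge> 1" unfolding Y_def using X by (simp add: field_simps)
  have eq: "(1/3) * (2/3) ^ k * X = 2 ^ k * Y"
    unfolding Y_def by (simp add: field_simps power_divide)
  have lnY: "ln Y \<ge> 0" using Y1 by simp
  have ln2kY: "ln (2 ^ k * Y) = k * ln 2 + ln Y" using Y1
    by (simp add: ln_mult ln_realpow)
  have "real k * ln 2 \<ge> real k * (1/2)" using ln2_ge by (intro mult_left_mono) auto
  hence "ln Y + k \<le> 2 * ln (2 ^ k * Y)"
    unfolding ln2kY using lnY by (simp add: algebra_simps)
  hence pw: "(ln Y + k) ^ k \<le> (2 * ln (2 ^ k * Y)) ^ k"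
    using lnY by (intro power_mono) auto
  have "real (Nstar (Suc k) X) \<le> Y * (ln Y + k) ^ k / fact k"
    using Nstar_S[of "Suc k" X] main_bound[OF Y1, of k] unfolding Y_def by simp
  also have "\<dots> \<le> Y * (2 * ln (2 ^ k * Y)) ^ k / fact k"
    using pw Y1 by (intro divide_right_mono mult_left_mono) auto
  also have "\<dots> = 1 / fact k * (2 ^ k * Y) * (ln (2 ^ k * Y)) ^ k"
    by (simp add: power_mult_distrib)
  also have "\<dots> = 1 / fact k * (1/3) * (2/3) ^ k * X * (ln ((1/3) * (2/3) ^ k * X)) ^ k"
    unfolding eq[symmetric] by simp
  finally show ?thesis .
qed

theorem lemma2:
  fixes j :: nat and X :: real
  assumes "j \<ge> 2" and "X \<ge> 1"
  shows "(X < 3 ^ j \<longrightarrow> Nstar j X = 0) \<and>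
         (X \<ge> 3 ^ j \<longrightarrow>
            real (Nstar j X) \<le> 1 / fact (j - 1) * (1/3) * (2/3) ^ (j - 1) * X *
              (ln ((1/3) * (2/3) ^ (j - 1) * X)) ^ (j - 1))"
proof -
  obtain k where j: "j = Suc k" using assms by (cases j) auto
  have 1: "X < 3 ^ j \<longrightarrow> Nstar j X = 0"
    using S_empty[of X j] Nstar_S[of j X] by simp
  have 2: "X \<ge> 3 ^ j \<longrightarrow>
            real (Nstar j X) \<le> 1 / fact (j - 1) * (1/3) * (2/3) ^ (j - 1) * X *
              (ln ((1/3) * (2/3) ^ (j - 1) * X)) ^ (j - 1)"
    using part2[of k X] unfolding j by simp
  show ?thesis using 1 2 by blast
qed

end
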